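(* Let $f:2^{\mathcal N}\to\mathbb R_{\ge0}$ be non-negative submodular and $\mathcal M=(\mathcal N,\mathcal I)$ a matroid of rank $k$, padded with dummy elements as described in the context. Consider the Smooth Residual Random Greedy algorithm (general matroid) with parameter $T$: $S_0=\emptyset$; for $i=1,\dots,T$, let $M_i$ be a base of $\mathcal M/S_{i-1}$ maximizing $\sum_{u\in M_i}[f(S_{i-1}\cup\{u\})-f(S_{i-1})]$; with probability $1-|S_{i-1}|/k$ let $u_i$ be a uniformly random element of $M_i$ and set $S_i=S_{i-1}\cup\{u_i\}$; otherwise set $S_i=S_{i-1}$. Then for every $i=1,\dots,T$, $$\mathbb E[f(O_{S_i}\cup S_i)]\ge\Big(1-\frac2k\Big)\mathbb E[f(O_{S_{i-1}}\cup S_{i-1})]+\frac1k\,\mathbb E[f(S_{i-1})].$$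
   Context: A set function $f$ is submodular if $f(A\cup B)+f(A\cap B)\le f(A)+f(B)$ for all $A,B\subseteq\mathcal N$. For $S\in\mathcal I$, the contracted matroid $\mathcal M/S$ has ground set $\mathcal N\setminus S$, with $S'\subseteq\mathcal N\setminus S$ independent iff $S'\cup S\in\mathcal I$. Padding assumption: the ground set contains zero-contribution dummy elements (e.g., a parallel copy $u'$ of every original element $u$, a set being independent iff it contains at most one of $u,u'$ for each $u$ and its projection onto the original elements is independent, and $f$ depending only on the original elements of a set), so that for every $S\in\mathcal I$ one may fix $O_S$ to be a set $A$ maximizing $f(S\cup A)$ over independent sets $A$ of $\mathcal M/S$ which is moreover a base of $\mathcal M/S$ (so $S\cup O_S$ is a base of $\mathcal M$ and $|O_S|=k-|S|$). *)

theory Defs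
  imports "HOL-Probability.Probability"
begin

definition matroid :: "'a set \<Rightarrow> ('a set \<Rightarrow> bool) \<Rightarrow> bool" where
  "matroid N indep \<longleftrightarrow>
     finite N \<and> indep {} \<and> (\<forall>A. indep A \<longrightarrow> A \<subseteq> N) \<and>
     (\<forall>A B. indep B \<and> A \<subseteq> B \<longrightarrow> indep A) \<and>
     (\<forall>A B. indep A \<and> indep B \<and> card A < card B \<longrightarrow> (\<exists>x\<in>B - A. indep (insert x A)))"

definition matroid_rank :: "('a set \<Rightarrow> bool) \<Rightarrow> nat" where
  "matroid_rank indep = Max (card ` {A. indep A})"

definition contract_indep :: "'a set \<Rightarrow> ('a set \<Rightarrow> bool) \<Rightarrow> 'a set \<Rightarrow> 'a set \<Rightarrow> bool" where
  "contract_indep N indep S A \<longleftrightarrow> A \<subseteq> N - S \<and> indep (A \<union> S)"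

definition is_base :: "('a set \<Rightarrow> bool) \<Rightarrow> 'a set \<Rightarrow> bool" where
  "is_base indep B \<longleftrightarrow> indep B \<and> (\<forall>A. indep A \<and> B \<subseteq> A \<longrightarrow> A = B)"

definition submodular_on :: "'a set \<Rightarrow> ('a set \<Rightarrow> real) \<Rightarrow> bool" where
  "submodular_on N f \<longleftrightarrow>
     (\<forall>A B. A \<subseteq> N \<and> B \<subseteq> N \<longrightarrow> f (A \<union> B) + f (A \<inter> B) \<le> f A + f B)"

text \<open>One iteration (number i) of Smooth Residual Random Greedy from current set S;
  Mc i S is the base M_i of M/S chosen in iteration i.\<close>
definition srrg_step ::
  "nat \<Rightarrow> (nat \<Rightarrow> 'a set \<Rightarrow> 'a set) \<Rightarrow> nat \<Rightarrow> 'a set \<Rightarrow> 'a set pmf" where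
  "srrg_step k Mc i S =
     bind_pmf (bernoulli_pmf (1 - real (card S) / real k))
       (\<lambda>b. if b then map_pmf (\<lambda>u. insert u S) (pmf_of_set (Mc i S)) else return_pmf S)"

fun srrg_dist :: "nat \<Rightarrow> (nat \<Rightarrow> 'a set \<Rightarrow> 'a set) \<Rightarrow> nat \<Rightarrow> 'a set pmf" where
  "srrg_dist k Mc 0 = return_pmf {}"
| "srrg_dist k Mc (Suc i) = bind_pmf (srrg_dist k Mc i) (srrg_step k Mc (Suc i))"

end

theory Submission
  imports Defs
begin
lemma hall:
  fixes G :: "'a \<Rightarrow> 'b set"
  assumes "finite X" "\<forall>x\<in>X. finite (G x)" "\<forall>Y\<subseteq>X. card Y \<le> card (\<Union>(G ` Y))"
  shows "\<exists>h. inj_on h X \<and> (\<forall>x\<in>X. h x \<in> G x)"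
  using assms
proof (induction "card X" arbitrary: X G rule: less_induct)
  case less
  show ?case
  proof (cases "X = {}")
    case True then show ?thesis by auto
  next
    case ne: False
    show ?thesis
    proof (cases "\<exists>Y. Y \<subseteq> X \<and> Y \<noteq> {} \<and> Y \<noteq> X \<and> card (\<Union>(G ` Y)) = card Y")
      case True
      then obtain Y where Y: "Y \<subseteq> X" "Y \<noteq> {}" "Y \<noteq> X" "card (\<Union>(G ` Y)) = card Y" by blast
      have fY: "finite Y" using Y(1) less.prems(1) finite_subset by blast
      have cY: "card Y < card X" using Y less.prems(1) by (meson psubsetI psubset_card_mono)
      have "\<exists>h. inj_on h Y \<and> (\<forall>x\<in>Y. h x \<in> G x)"
      proof (rule less.hyps[OF cY fY])
        show "\<forall>x\<in>Y. finite (G x)" using less.prems(2) Y(1) by blast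
        show "\<forall>Z\<subseteq>Y. card Z \<le> card (\<Union>(G ` Z))" using less.prems(3) Y(1) by blast
      qed
      then obtain h1 where h1: "inj_on h1 Y" "\<forall>x\<in>Y. h1 x \<in> G x" by blast
      define G' where "G' = (\<lambda>x. G x - \<Union>(G ` Y))"
      have cXY: "card (X - Y) < card X" using Y less.prems(1)
        by (metis Diff_subset card_Diff_subset card_gt_0_iff diff_less fY finite_subset le_neq_implies_less ne subset_empty card_mono)
      have hallXY: "\<forall>Z\<subseteq>X - Y. card Z \<le> card (\<Union>(G' ` Z))"
      proof (intro allI impI)
        fix Z assume Z: "Z \<subseteq> X - Y"
        have fZ: "finite Z" using Z less.prems(1) finite_subset by blast
        have e: "\<Union>(G' ` Z) = \<Union>(G ` (Z \<union> Y)) - \<Union>(G ` Y)" unfolding G'_def by auto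
        have fin: "finite (\<Union>(G ` (Z \<union> Y)))" using Z Y(1) fZ fY less.prems(2) by auto
        have "card (\<Union>(G' ` Z)) = card (\<Union>(G ` (Z \<union> Y))) - card (\<Union>(G ` Y))"
          unfolding e by (rule card_Diff_subset) (use fin in \<open>auto intro: finite_subset\<close>)
        moreover have "Z \<union> Y \<subseteq> X" using Z Y(1) by auto
        then have "card (Z \<union> Y) \<le> card (\<Union>(G ` (Z \<union> Y)))" using less.prems(3) by blast
        moreover have "card (Z \<union> Y) = card Z + card Y" using Z fZ fY by (subst card_Un_disjoint) auto
        ultimately show "card Z \<le> card (\<Union>(G' ` Z))" using Y(4) by linarith
      qed
      obtain h2 where h2: "inj_on h2 (X - Y)" "\<forall>x\<in>X - Y. h2 x \<in> G' x"
        using less.hyps[OF cXY, of G'] less.prems hallXY unfolding G'_def by auto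
      define h where "h = (\<lambda>x. if x \<in> Y then h1 x else h2 x)"
      have "inj_on h X"
        unfolding inj_on_def
      proof (intro ballI impI)
        fix x y assume xy: "x \<in> X" "y \<in> X" "h x = h y"
        show "x = y"
        proof (cases "x \<in> Y"; cases "y \<in> Y")
          assume "x \<in> Y" "y \<in> Y" then show ?thesis using xy h1 unfolding h_def inj_on_def by auto
        next
          assume a: "x \<in> Y" "y \<notin> Y"
          then have "h x \<in> \<Union>(G ` Y)" using h1 unfolding h_def by auto
          moreover have "h y \<notin> \<Union>(G ` Y)" using a h2 xy unfolding h_def G'_def by auto
          ultimately show ?thesis using xy by auto
        next
          assume a: "x \<notin> Y" "y \<in> Y"
          then have "h y \<in> \<Union>(G ` Y)" using h1 unfolding h_def by auto
          moreover have "h x \<notin> \<Union>(G ` Y)" using a(1) h2 xy(1) unfolding h_def G'_def by auto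
          ultimately show ?thesis using xy by auto
        next
          assume "x \<notin> Y" "y \<notin> Y" then show ?thesis using xy h2 unfolding h_def inj_on_def by auto
        qed
      qed
      moreover have "\<forall>x\<in>X. h x \<in> G x" using h1 h2 unfolding h_def G'_def by auto
      ultimately show ?thesis by blast
    next
      case False
      then have big: "\<And>Y. Y \<subseteq> X \<Longrightarrow> Y \<noteq> {} \<Longrightarrow> Y \<noteq> X \<Longrightarrow> card Y + 1 \<le> card (\<Union>(G ` Y))"
        using less.prems(3) by (metis Suc_eq_plus1 Suc_leI le_neq_implies_less)
      obtain x where x: "x \<in> X" using ne by blast
      have "1 \<le> card (\<Union>(G ` {x}))" using less.prems(3) x by (metis empty_subsetI insert_subset is_singletonI is_singleton_altdef)
      then have "G x \<noteq> {}" by auto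
      then obtain y where y: "y \<in> G x" by blast
      define G' where "G' = (\<lambda>z. G z - {y})"
      have cX: "card (X - {x}) < card X" using x less.prems(1) by (meson card_Diff1_less)
      have hall': "\<forall>Z\<subseteq>X - {x}. card Z \<le> card (\<Union>(G' ` Z))"
      proof (intro allI impI)
        fix Z assume Z: "Z \<subseteq> X - {x}"
        show "card Z \<le> card (\<Union>(G' ` Z))"
        proof (cases "Z = {}")
          case True then show ?thesis by simp
        next
          case False
          have fZ: "finite Z" using Z less.prems(1) finite_subset by blast
          have fin: "finite (\<Union>(G ` Z))" using Z fZ less.prems(2) by auto
          have "card Z + 1 \<le> card (\<Union>(G ` Z))" using big[of Z] Z False x by auto
          moreover have "\<Union>(G' ` Z) = \<Union>(G ` Z) - {y}" unfolding G'_def by auto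
          moreover have "card (\<Union>(G ` Z) - {y}) \<ge> card (\<Union>(G ` Z)) - 1"
            using fin by (simp add: card_Diff_singleton_if)
          ultimately show ?thesis by simp
        qed
      qed
      obtain h' where h': "inj_on h' (X - {x})" "\<forall>z\<in>X - {x}. h' z \<in> G' z"
        using less.hyps[OF cX, of G'] less.prems hall' unfolding G'_def by auto
      define h where "h = h'(x := y)"
      have "inj_on h X"
        unfolding inj_on_def h_def using h' unfolding inj_on_def G'_def by auto
      moreover have "\<forall>z\<in>X. h z \<in> G z" using h' y unfolding h_def G'_def by auto
      ultimately show ?thesis by blast
    qed
  qed
qed


lemma mat_sub: "matroid N indep \<Longrightarrow> indep A \<Longrightarrow> A \<subseteq> N"
  unfolding matroid_def by blast
lemma mat_fin: "matroid N indep \<Longrightarrow> indep A \<Longrightarrow> finite A"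
  unfolding matroid_def by (meson finite_subset)
lemma mat_down: "matroid N indep \<Longrightarrow> indep B \<Longrightarrow> A \<subseteq> B \<Longrightarrow> indep A"
  unfolding matroid_def by blast
lemma mat_aug: "matroid N indep \<Longrightarrow> indep A \<Longrightarrow> indep B \<Longrightarrow> card A < card B \<Longrightarrow> \<exists>x\<in>B - A. indep (insert x A)"
  unfolding matroid_def by blast
lemma mat_empty: "matroid N indep \<Longrightarrow> indep {}"
  unfolding matroid_def by blast

lemma mat_extend:
  assumes M: "matroid N indep" and K: "indep K" and B: "indep B"
  shows "\<exists>K'. K \<subseteq> K' \<and> K' \<subseteq> K \<union> B \<and> indep K' \<and> card B \<le> card K'"
  using K
proof (induction "card B - card K" arbitrary: K rule: less_induct)
  case less
  show ?case
  proof (cases "card B \<le> card K")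
    case True then show ?thesis using less.prems by blast
  next
    case False
    then obtain x where x: "x \<in> B - K" "indep (insert x K)"
      using mat_aug[OF M less.prems B] by auto
    have fK: "finite K" using mat_fin[OF M less.prems] .
    have c: "card (insert x K) = card K + 1" using x fK by simp
    have "card B - card (insert x K) < card B - card K" using c False by linarith
    from less.hyps[OF this x(2)] obtain K' where
      "insert x K \<subseteq> K'" "K' \<subseteq> insert x K \<union> B" "indep K'" "card B \<le> card K'" by blast
    then show ?thesis using x by blast
  qed
qed

lemma rank_fin: "matroid N indep \<Longrightarrow> finite (card ` {A. indep A})"
proof -
  assume M: "matroid N indep"
  have "{A. indep A} \<subseteq> Pow N" using mat_sub[OF M] by blast
  moreover have "finite N" using M unfolding matroid_def by blast
  ultimately show ?thesis by (meson finite_Pow_iff finite_imageI finite_subset)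
qed

lemma rank_ge: "matroid N indep \<Longrightarrow> indep A \<Longrightarrow> card A \<le> matroid_rank indep"
  unfolding matroid_rank_def using rank_fin by (metis Max_ge image_eqI mem_Collect_eq)

lemma rank_ex: "matroid N indep \<Longrightarrow> \<exists>A. indep A \<and> card A = matroid_rank indep"
proof -
  assume M: "matroid N indep"
  have "card ` {A. indep A} \<noteq> {}" using mat_empty[OF M] by blast
  from Max_in[OF rank_fin[OF M] this] show ?thesis unfolding matroid_rank_def by auto
qed

lemma base_props:
  assumes M: "matroid N indep" and S: "indep S" and B: "is_base (contract_indep N indep S) B"
  shows "B \<subseteq> N - S" "indep (B \<union> S)" "finite B"
    "\<And>A. A \<subseteq> N - S \<Longrightarrow> indep (A \<union> S) \<Longrightarrow> B \<subseteq> A \<Longrightarrow> A = B"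
  using B mat_fin[OF M] unfolding is_base_def contract_indep_def
  by (auto intro: finite_subset)

lemma base_card:
  assumes M: "matroid N indep" and S: "indep S" and B: "is_base (contract_indep N indep S) B"
  shows "card B + card S = matroid_rank indep"
proof -
  note bp = base_props[OF M S B]
  have fS: "finite S" using mat_fin[OF M S] .
  have cu: "card (B \<union> S) = card B + card S" using bp(1,3) fS by (subst card_Un_disjoint) auto
  have le: "card (B \<union> S) \<le> matroid_rank indep" using rank_ge[OF M bp(2)] .
  have "\<not> card (B \<union> S) < matroid_rank indep"
  proof
    assume lt: "card (B \<union> S) < matroid_rank indep"
    obtain A where A: "indep A" "card A = matroid_rank indep" using rank_ex[OF M] by blast
    obtain x where x: "x \<in> A - (B \<union> S)" "indep (insert x (B \<union> S))"
      using mat_aug[OF M bp(2) A(1)] lt A(2) by auto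
    have xN: "x \<in> N" using mat_sub[OF M A(1)] x by auto
    have "insert x B = B"
      using bp(4)[of "insert x B"] bp(1) x xN by auto
    then show False using x by auto
  qed
  then show ?thesis using le cu by linarith
qed

lemma exch_hall:
  assumes M: "matroid N indep" and S: "indep S"
    and Ob: "is_base (contract_indep N indep S) Ob" and B: "is_base (contract_indep N indep S) Mb"
  shows "\<exists>h. inj_on h Mb \<and> (\<forall>u\<in>Mb. h u \<in> Ob \<and> indep (insert u (S \<union> (Ob - {h u}))))"
proof -
  note op = base_props[OF M S Ob] and bp = base_props[OF M S B]
  have fS: "finite S" using mat_fin[OF M S] .
  define G where "G = (\<lambda>u. {ob\<in>Ob. indep (insert u (S \<union> (Ob - {ob})))})"
  have hallc: "\<forall>Y\<subseteq>Mb. card Y \<le> card (\<Union>(G ` Y))"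
  proof (intro allI impI)
    fix Y assume Y: "Y \<subseteq> Mb"
    define Gy where "Gy = \<Union>(G ` Y)"
    have GyO: "Gy \<subseteq> Ob" unfolding Gy_def G_def by auto
    show "card Y \<le> card (\<Union>(G ` Y))"
    proof (rule ccontr)
      assume "\<not> card Y \<le> card (\<Union>(G ` Y))"
      then have lt: "card Gy < card Y" unfolding Gy_def by simp
      have fY: "finite Y" using Y bp(3) finite_subset by blast
      have fGy: "finite Gy" using GyO op(3) finite_subset by blast
      have i1: "indep (S \<union> Gy)" using mat_down[OF M op(2)] GyO by blast
      have i2: "indep (S \<union> Y)" using mat_down[OF M bp(2)] Y by blast
      have c1: "card (S \<union> Gy) = card S + card Gy" using fS fGy GyO op(1) by (subst card_Un_disjoint) auto
      have c2: "card (S \<union> Y) = card S + card Y" using fS fY Y bp(1) by (subst card_Un_disjoint) auto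
      obtain y where y: "y \<in> (S \<union> Y) - (S \<union> Gy)" "indep (insert y (S \<union> Gy))"
        using mat_aug[OF M i1 i2] c1 c2 lt by auto
      have yY: "y \<in> Y" "y \<notin> S" "y \<notin> Gy" using y by auto
      have yN: "y \<in> N" using yY Y bp(1) by auto
      have yO: "y \<notin> Ob"
      proof
        assume yO: "y \<in> Ob"
        have "insert y (S \<union> (Ob - {y})) = Ob \<union> S" using yO by auto
        then have "y \<in> G y" unfolding G_def using yO op(2) by auto
        then have "y \<in> Gy" unfolding Gy_def using yY by auto
        then show False using yY by auto
      qed
      obtain K where K: "insert y (S \<union> Gy) \<subseteq> K" "K \<subseteq> insert y (S \<union> Gy) \<union> (Ob \<union> S)"
        "indep K" "card (Ob \<union> S) \<le> card K"
        using mat_extend[OF M y(2) op(2)] by blast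
      have Ksub: "K \<subseteq> insert y (S \<union> Ob)" using K(2) GyO by auto
      have notind: "\<not> indep (insert y (S \<union> Ob))"
      proof
        assume a: "indep (insert y (S \<union> Ob))"
        have e: "insert y Ob \<union> S = insert y (S \<union> Ob)" by auto
        have "insert y Ob \<subseteq> N - S" using op(1) yN yY(2) by auto
        then have "insert y Ob = Ob" using op(4)[of "insert y Ob"] a e by auto
        then show False using yO by auto
      qed
      then have "K \<noteq> insert y (S \<union> Ob)" using K(3) by auto
      then obtain ob where ob: "ob \<in> insert y (S \<union> Ob)" "ob \<notin> K" using Ksub by blast
      have oO: "ob \<in> Ob" "ob \<notin> Gy" using ob K(1) by auto
      define W where "W = insert y (S \<union> (Ob - {ob}))"
      have KW: "K \<subseteq> W" using Ksub ob unfolding W_def by auto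
      have fW: "finite W" unfolding W_def using fS op(3) by auto
      have cOS: "card (Ob \<union> S) = card S + card Ob" using fS op(3) op(1) by (subst card_Un_disjoint) auto
      have "card W = card (S \<union> (Ob - {ob})) + 1" unfolding W_def using yY yO fS op(3)
        by (subst card_insert_disjoint) auto
      also have "card (S \<union> (Ob - {ob})) = card S + card (Ob - {ob})"
        using fS op(3) op(1) by (subst card_Un_disjoint) auto
      also have "card (Ob - {ob}) = card Ob - 1" using oO op(3) by simp
      finally have cW0: "card W = card S + (card Ob - 1) + 1" .
      have "card Ob > 0" using oO op(3) card_gt_0_iff by blast
      then have cW: "card W = card S + card Ob" using cW0 by linarith
      have "card K = card W" using card_mono[OF fW KW] K(4) cOS cW by linarith
      then have "K = W" using card_subset_eq[OF fW KW] by simp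
      then have "indep W" using K(3) by simp
      then have "ob \<in> G y" unfolding G_def W_def using oO by auto
      then have "ob \<in> Gy" unfolding Gy_def using yY by auto
      then show False using oO by auto
    qed
  qed
  have "\<forall>u\<in>Mb. finite (G u)" unfolding G_def using op(3) by auto
  from hall[OF bp(3) this hallc] obtain h where "inj_on h Mb" "\<forall>u\<in>Mb. h u \<in> G u" by blast
  then show ?thesis unfolding G_def by auto
qed


lemma sub_ax: "submodular_on N f \<Longrightarrow> X \<subseteq> N \<Longrightarrow> Y \<subseteq> N \<Longrightarrow> f (X \<union> Y) + f (X \<inter> Y) \<le> f X + f Y"
  unfolding submodular_on_def by blast

lemma sub_L1:
  assumes sub: "submodular_on N f" and fin: "finite B" and A: "A \<subseteq> N" and B: "B \<subseteq> N"
  shows "f (A \<union> B) - f A \<le> (\<Sum>u\<in>B. f (insert u A) - f A)"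
  using fin B
proof (induction B rule: finite_induct)
  case empty then show ?case by simp
next
  case (insert x F)
  have "f ((A \<union> F) \<union> insert x A) + f ((A \<union> F) \<inter> insert x A) \<le> f (A \<union> F) + f (insert x A)"
    using sub_ax[OF sub, of "A \<union> F" "insert x A"] A insert.prems by auto
  moreover have "(A \<union> F) \<union> insert x A = A \<union> insert x F" by auto
  moreover have "(A \<union> F) \<inter> insert x A = A" using insert.hyps(2) by auto
  ultimately have "f (A \<union> insert x F) - f (A \<union> F) \<le> f (insert x A) - f A" by simp
  then show ?case using insert by simp
qed

lemma sub_L2:
  assumes sub: "submodular_on N f" and fin: "finite Ob" and OA: "Ob \<subseteq> A" and A: "A \<subseteq> N"
  shows "(\<Sum>ob\<in>Ob. f A - f (A - {ob})) \<le> f A - f (A - Ob)"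
  using fin OA
proof (induction Ob rule: finite_induct)
  case empty then show ?case by simp
next
  case (insert x F)
  have "f ((A - F) \<union> (A - {x})) + f ((A - F) \<inter> (A - {x})) \<le> f (A - F) + f (A - {x})"
    using sub_ax[OF sub, of "A - F" "A - {x}"] A by auto
  moreover have "(A - F) \<union> (A - {x}) = A" using insert.hyps(2) insert.prems by auto
  moreover have "(A - F) \<inter> (A - {x}) = A - insert x F" by auto
  ultimately have "f A - f (A - {x}) \<le> f (A - F) - f (A - insert x F)" by simp
  then show ?case using insert by simp
qed

lemma core:
  assumes M: "matroid N indep"
    and f_nonneg: "\<forall>A. A \<subseteq> N \<longrightarrow> f A \<ge> 0"
    and f_sub: "submodular_on N f"
    and Opt_def: "\<forall>S. indep S \<longrightarrow>
        is_base (contract_indep N indep S) (Opt S) \<and>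
        (\<forall>A. contract_indep N indep S A \<longrightarrow> f (S \<union> A) \<le> f (S \<union> Opt S))"
    and S: "indep S" and B: "is_base (contract_indep N indep S) Mb"
  shows "(real (card Mb) - 2) * f (S \<union> Opt S) + f S \<le> (\<Sum>u\<in>Mb. f (Opt (insert u S) \<union> insert u S))"
proof -
  define Ob where "Ob = Opt S"
  define A where "A = S \<union> Ob"
  have OS: "is_base (contract_indep N indep S) (Opt S) \<and>
        (\<forall>A. contract_indep N indep S A \<longrightarrow> f (S \<union> A) \<le> f (S \<union> Opt S))"
    using Opt_def[rule_format, OF S] .
  have O: "is_base (contract_indep N indep S) Ob" using OS unfolding Ob_def by (rule conjunct1)
  have Oopt: "\<And>A'. contract_indep N indep S A' \<Longrightarrow> f (S \<union> A') \<le> f (S \<union> Ob)"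
    using OS unfolding Ob_def by simp
  note op = base_props[OF M S O] and bp = base_props[OF M S B]
  obtain h where h: "inj_on h Mb" "\<And>u. u \<in> Mb \<Longrightarrow> h u \<in> Ob"
    "\<And>u. u \<in> Mb \<Longrightarrow> indep (insert u (S \<union> (Ob - {h u})))"
    using exch_hall[OF M S O B] by blast
  have AN: "A \<subseteq> N" unfolding A_def using op(1) mat_sub[OF M S] by auto
  have ObA: "Ob \<subseteq> A" unfolding A_def by auto
  have E_nn: "f (A - {ob}) \<le> f A" if ob: "ob \<in> Ob" for ob
  proof -
    have "contract_indep N indep S (Ob - {ob})"
      unfolding contract_indep_def using op(1) mat_down[OF M op(2), of "Ob - {ob} \<union> S"] by blast
    from Oopt[OF this] have "f (S \<union> (Ob - {ob})) \<le> f (S \<union> Ob)" .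
    moreover have "S \<union> (Ob - {ob}) = A - {ob}" unfolding A_def using ob op(1) by auto
    ultimately show ?thesis unfolding A_def by simp
  qed
  have each: "f A + (f (insert u A) - f A) - (f A - f (A - {h u})) \<le> f (Opt (insert u S) \<union> insert u S)"
    if u: "u \<in> Mb" for u
  proof -
    have uN: "u \<in> N" "u \<notin> S" using u bp(1) by auto
    have step1: "f A + (f (insert u A) - f A) - (f A - f (A - {h u})) \<le> f (insert u (A - {h u}))"
    proof (cases "u = h u")
      case True
      then have "u \<in> A" using h(2)[OF u] ObA by auto
      then have "insert u (A - {h u}) = A" "insert u A = A" using True by auto
      then show ?thesis using E_nn[OF h(2)[OF u]] by simp
    next
      case False
      have "f (insert u (A - {h u}) \<union> A) + f (insert u (A - {h u}) \<inter> A) \<le> f (insert u (A - {h u})) + f A"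
        using sub_ax[OF f_sub, of "insert u (A - {h u})" A] AN uN by auto
      moreover have "insert u (A - {h u}) \<union> A = insert u A" by auto
      moreover have "insert u (A - {h u}) \<inter> A = A - {h u}" using False by auto
      ultimately show ?thesis by simp
    qed
    have "insert u S \<subseteq> insert u (S \<union> (Ob - {h u}))" by auto
    then have iu: "indep (insert u S)" by (rule mat_down[OF M h(3)[OF u]])
    have "contract_indep N indep (insert u S) (Ob - {h u} - {u})"
    proof -
      have e: "(Ob - {h u} - {u}) \<union> insert u S = insert u (S \<union> (Ob - {h u}))" by auto
      have "Ob - {h u} - {u} \<subseteq> N - insert u S" using op(1) by auto
      moreover have "indep ((Ob - {h u} - {u}) \<union> insert u S)" unfolding e by (rule h(3)[OF u])
      ultimately show ?thesis unfolding contract_indep_def by (rule conjI)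
    qed
    then have "f (insert u S \<union> (Ob - {h u} - {u})) \<le> f (insert u S \<union> Opt (insert u S))"
      using conjunct2[OF Opt_def[rule_format, OF iu]] by blast
    moreover have "insert u S \<union> (Ob - {h u} - {u}) = insert u (A - {h u})"
      unfolding A_def using h(2)[OF u] op(1) by auto
    ultimately have "f (insert u (A - {h u})) \<le> f (Opt (insert u S) \<union> insert u S)"
      by (simp add: sup_commute)
    then show ?thesis using step1 by linarith
  qed
  have "(\<Sum>u\<in>Mb. f A + (f (insert u A) - f A) - (f A - f (A - {h u})))
        \<le> (\<Sum>u\<in>Mb. f (Opt (insert u S) \<union> insert u S))"
    using each by (rule sum_mono)
  moreover have "(\<Sum>u\<in>Mb. f A + (f (insert u A) - f A) - (f A - f (A - {h u})))
     = real (card Mb) * f A + (\<Sum>u\<in>Mb. f (insert u A) - f A) - (\<Sum>u\<in>Mb. f A - f (A - {h u}))"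
    by (simp add: sum.distrib sum_subtractf)
  moreover have D: "(\<Sum>u\<in>Mb. f (insert u A) - f A) \<ge> - f A"
  proof -
    have "f (A \<union> Mb) - f A \<le> (\<Sum>u\<in>Mb. f (insert u A) - f A)"
      using sub_L1[OF f_sub bp(3) AN] bp(1) by auto
    moreover have "A \<union> Mb \<subseteq> N" using AN bp(1) by auto
    then have "f (A \<union> Mb) \<ge> 0" using f_nonneg by blast
    ultimately show ?thesis by linarith
  qed
  moreover have E: "(\<Sum>u\<in>Mb. f A - f (A - {h u})) \<le> f A - f S"
  proof -
    have "(\<Sum>u\<in>Mb. f A - f (A - {h u})) = (\<Sum>ob\<in>h ` Mb. f A - f (A - {ob}))"
      using sum.reindex[OF h(1), of "\<lambda>ob. f A - f (A - {ob})"] by simp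
    also have "\<dots> \<le> (\<Sum>ob\<in>Ob. f A - f (A - {ob}))"
      by (rule sum_mono2) (use op(3) h(2) E_nn in auto)
    also have "\<dots> \<le> f A - f (A - Ob)" by (rule sub_L2[OF f_sub op(3) ObA AN])
    also have "A - Ob = S" unfolding A_def using op(1) by auto
    finally show ?thesis .
  qed
  ultimately have "real (card Mb) * f A - f A - (f A - f S) \<le> (\<Sum>u\<in>Mb. f (Opt (insert u S) \<union> insert u S))"
    by linarith
  then show ?thesis unfolding A_def Ob_def by (simp add: algebra_simps)
qed


lemma exp_return: "measure_pmf.expectation (return_pmf x) (h :: 'a \<Rightarrow> real) = h x"
  by (subst integral_measure_pmf_real[of "{x}"]) auto

lemma supp:
  assumes M: "matroid N indep" and rank: "k = matroid_rank indep" and kpos: "k > 0"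
    and Mc_def: "\<forall>j S. indep S \<longrightarrow>
        is_base (contract_indep N indep S) (Mc j S) \<and>
        (\<forall>B. is_base (contract_indep N indep S) B \<longrightarrow>
           (\<Sum>u\<in>B. f (S \<union> {u}) - f S) \<le> (\<Sum>u\<in>Mc j S. f (S \<union> {u}) - f S))"
  shows "S \<in> set_pmf (srrg_dist k Mc n) \<Longrightarrow> indep S \<and> card S \<le> k"
proof (induction n arbitrary: S)
  case 0 then show ?case using mat_empty[OF M] by simp
next
  case (Suc n)
  define p where "p = 1 - real (card S) / real k"
  from Suc.prems have "S \<in> set_pmf (bind_pmf (srrg_dist k Mc n) (srrg_step k Mc (Suc n)))" by simp
  then obtain S0 where S0: "S0 \<in> set_pmf (srrg_dist k Mc n)"
    and S0': "S \<in> set_pmf (srrg_step k Mc (Suc n) S0)" unfolding set_bind_pmf by blast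
  from S0' obtain b where
    b: "b \<in> set_pmf (bernoulli_pmf (1 - real (card S0) / real k))"
    and S: "S \<in> set_pmf (if b then map_pmf (\<lambda>u. insert u S0) (pmf_of_set (Mc (Suc n) S0)) else return_pmf S0)"
    unfolding srrg_step_def set_bind_pmf by blast
  have IH: "indep S0" "card S0 \<le> k" using Suc.IH[OF S0] by auto
  show ?case
  proof (cases b)
    case False then have "S = S0" using S by simp
    then show ?thesis using IH by simp
  next
    case True
    have p01: "0 \<le> 1 - real (card S0) / real k" "1 - real (card S0) / real k \<le> 1"
      using IH kpos by (auto simp: field_simps)
    have "pmf (bernoulli_pmf (1 - real (card S0) / real k)) True \<noteq> 0"
      using b True by (simp add: set_pmf_iff)
    then have "1 - real (card S0) / real k \<noteq> 0" using p01 by simp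
    then have lt: "card S0 < k" using IH kpos by (auto simp: field_simps)
    define Mb where "Mb = Mc (Suc n) S0"
    have B: "is_base (contract_indep N indep S0) Mb" unfolding Mb_def using Mc_def[rule_format, OF IH(1)] by (rule conjunct1)
    note bp = base_props[OF M IH(1) B]
    have cB: "card Mb + card S0 = k" using base_card[OF M IH(1) B] rank by simp
    have ne: "Mb \<noteq> {}" using cB lt by auto
    have sM: "set_pmf (pmf_of_set Mb) = Mb" using set_pmf_of_set[OF ne bp(3)] .
    from S True have "S \<in> set_pmf (map_pmf (\<lambda>u. insert u S0) (pmf_of_set Mb))"
      unfolding Mb_def by (simp only: if_True)
    then have "S \<in> (\<lambda>u. insert u S0) ` Mb" unfolding set_map_pmf sM .
    then obtain u where u: "u \<in> Mb" "S = insert u S0" by blast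
    have "S \<subseteq> Mb \<union> S0" using u by auto
    then have "indep S" by (rule mat_down[OF M bp(2)])
    moreover have "u \<notin> S0" using u(1) bp(1) by blast
    then have "card S = card S0 + 1" using u(2) mat_fin[OF M IH(1)] by simp
    ultimately show ?thesis using lt by simp
  qed
qed

lemma step_exp_lt:
  assumes lt: "card S < k" and fin: "finite (Mc j S)" and ne: "Mc j S \<noteq> {}"
  shows "measure_pmf.expectation (srrg_step k Mc j S) (h :: 'a set \<Rightarrow> real)
     = (1 - real (card S) / real k) * ((\<Sum>u\<in>Mc j S. h (insert u S)) / real (card (Mc j S)))
       + real (card S) / real k * h S"
proof -
  define p where "p = 1 - real (card S) / real k"
  have p01: "0 \<le> p" "p \<le> 1" using lt unfolding p_def by (auto simp: field_simps)
  have "measure_pmf.expectation (srrg_step k Mc j S) h =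
     (\<Sum>b\<in>UNIV. pmf (bernoulli_pmf p) b *\<^sub>R measure_pmf.expectation
        (if b then map_pmf (\<lambda>u. insert u S) (pmf_of_set (Mc j S)) else return_pmf S) h)"
    unfolding srrg_step_def p_def[symmetric]
    by (rule pmf_expectation_bind) (use fin ne in auto)
  also have "\<dots> = p * measure_pmf.expectation (map_pmf (\<lambda>u. insert u S) (pmf_of_set (Mc j S))) h
      + (1 - p) * h S"
    using p01 by (simp add: UNIV_bool exp_return)
  also have "measure_pmf.expectation (map_pmf (\<lambda>u. insert u S) (pmf_of_set (Mc j S))) h
     = (\<Sum>u\<in>Mc j S. h (insert u S)) / real (card (Mc j S))"
    using integral_pmf_of_set[OF ne fin] by simp
  finally show ?thesis unfolding p_def by simp
qed

lemma step_exp_eq: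
  assumes "card S = k" "k > 0"
  shows "measure_pmf.expectation (srrg_step k Mc j S) (h :: 'a set \<Rightarrow> real) = h S"
proof -
  have "bernoulli_pmf (1 - real (card S) / real k) = return_pmf False"
    using assms by (intro pmf_eqI) (auto split: split_indicator)
  then show ?thesis unfolding srrg_step_def by (simp add: bind_return_pmf exp_return)
qed


lemma pointwise:
  assumes M: "matroid N indep"
    and rank: "k = matroid_rank indep" and kpos: "k > 0"
    and f_nonneg: "\<forall>A. A \<subseteq> N \<longrightarrow> f A \<ge> 0"
    and f_sub: "submodular_on N f"
    and Opt_def: "\<forall>S. indep S \<longrightarrow>
        is_base (contract_indep N indep S) (Opt S) \<and>
        (\<forall>A. contract_indep N indep S A \<longrightarrow> f (S \<union> A) \<le> f (S \<union> Opt S))"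
    and Mc_def: "\<forall>j S. indep S \<longrightarrow>
        is_base (contract_indep N indep S) (Mc j S) \<and>
        (\<forall>B. is_base (contract_indep N indep S) B \<longrightarrow>
           (\<Sum>u\<in>B. f (S \<union> {u}) - f S) \<le> (\<Sum>u\<in>Mc j S. f (S \<union> {u}) - f S))"
    and S: "indep S" and cS: "card S \<le> k"
  shows "(1 - 2 / real k) * f (Opt S \<union> S) + (1 / real k) * f S
     \<le> measure_pmf.expectation (srrg_step k Mc j S) (\<lambda>S. f (Opt S \<union> S))"
proof -
  define g where "g = f (Opt S \<union> S)"
  define fS where "fS = f S"
  have OS: "is_base (contract_indep N indep S) (Opt S) \<and>
        (\<forall>A. contract_indep N indep S A \<longrightarrow> f (S \<union> A) \<le> f (S \<union> Opt S))"
    using Opt_def[rule_format, OF S] .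
  have O: "is_base (contract_indep N indep S) (Opt S)" using OS by (rule conjunct1)
  note op = base_props[OF M S O]
  have SN: "S \<subseteq> N" using mat_sub[OF M S] .
  have ci0: "contract_indep N indep S {}" unfolding contract_indep_def using S by simp
  have "f (S \<union> {}) \<le> f (S \<union> Opt S)" using conjunct2[OF OS] ci0 by blast
  then have fle: "fS \<le> g" unfolding fS_def g_def by (simp add: Un_commute)
  have "Opt S \<union> S \<subseteq> N" using op(1) SN by auto
  then have gnn: "0 \<le> g" unfolding g_def using f_nonneg by blast
  have fnn: "0 \<le> fS" unfolding fS_def using f_nonneg SN by blast
  have kr: "real k > 0" using kpos by simp
  show ?thesis
  proof (cases "card S = k")
    case True
    have E: "measure_pmf.expectation (srrg_step k Mc j S) (\<lambda>S. f (Opt S \<union> S)) = g"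
      unfolding g_def by (rule step_exp_eq[OF True kpos])
    have L: "(1 - 2 / real k) * g + (1 / real k) * fS = g - (2 * g - fS) / real k"
      using kr by (simp add: field_simps)
    have "(2 * g - fS) / real k \<ge> 0" using fle gnn kr by simp
    then show ?thesis using L E unfolding g_def fS_def by linarith
  next
    case False
    then have lt: "card S < k" using cS by simp
    define Mb where "Mb = Mc j S"
    have B: "is_base (contract_indep N indep S) Mb" unfolding Mb_def
      using Mc_def[rule_format, OF S] by (rule conjunct1)
    note bp = base_props[OF M S B]
    have cB: "card Mb + card S = k" using base_card[OF M S B] rank by simp
    have ne: "Mb \<noteq> {}" using cB lt by auto
    have mpos: "real (card Mb) > 0" using cB lt by simp
    have kk: "real k = real (card Mb) + real (card S)" using cB by simp
    define Sg where "Sg = (\<Sum>u\<in>Mb. f (Opt (insert u S) \<union> insert u S))"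
    have E: "measure_pmf.expectation (srrg_step k Mc j S) (\<lambda>S. f (Opt S \<union> S))
       = (1 - real (card S) / real k) * (Sg / real (card Mb)) + real (card S) / real k * g"
      unfolding Sg_def g_def Mb_def by (rule step_exp_lt[OF lt]) (use bp(3) ne Mb_def in auto)
    have p: "1 - real (card S) / real k = real (card Mb) / real k" using kr kk by (simp add: field_simps)
    have E2: "(1 - real (card S) / real k) * (Sg / real (card Mb)) + real (card S) / real k * g
       = (Sg + real (card S) * g) / real k"
      unfolding p using mpos kr by (simp add: field_simps)
    have core': "(real (card Mb) - 2) * g + fS \<le> Sg"
      using core[OF M f_nonneg f_sub Opt_def S B] unfolding g_def fS_def Sg_def by (simp add: Un_commute)
    have L: "(1 - 2 / real k) * g + (1 / real k) * fS = ((real k - 2) * g + fS) / real k"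
      using kr by (simp add: field_simps)
    have "(real k - 2) * g + fS = (real (card Mb) - 2) * g + fS + real (card S) * g"
      unfolding kk by (simp add: algebra_simps)
    then have "(real k - 2) * g + fS \<le> Sg + real (card S) * g" using core' by linarith
    then have "((real k - 2) * g + fS) / real k \<le> (Sg + real (card S) * g) / real k"
      using kr by (simp add: divide_right_mono)
    then show ?thesis using L E E2 unfolding g_def fS_def by linarith
  qed
qed

theorem lemma13:
  fixes N :: "'a set" and indep :: "'a set \<Rightarrow> bool" and f :: "'a set \<Rightarrow> real"
    and k T i :: nat and Opt :: "'a set \<Rightarrow> 'a set" and Mc :: "nat \<Rightarrow> 'a set \<Rightarrow> 'a set"
  assumes M: "matroid N indep"
    and rank: "k = matroid_rank indep" and kpos: "k > 0"
    and f_nonneg: "\<forall>A. A \<subseteq> N \<longrightarrow> f A \<ge> 0"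
    and f_sub: "submodular_on N f"
    and Opt_def: "\<forall>S. indep S \<longrightarrow>
        is_base (contract_indep N indep S) (Opt S) \<and>
        (\<forall>A. contract_indep N indep S A \<longrightarrow> f (S \<union> A) \<le> f (S \<union> Opt S))"
    and Mc_def: "\<forall>j S. indep S \<longrightarrow>
        is_base (contract_indep N indep S) (Mc j S) \<and>
        (\<forall>B. is_base (contract_indep N indep S) B \<longrightarrow>
           (\<Sum>u\<in>B. f (S \<union> {u}) - f S) \<le> (\<Sum>u\<in>Mc j S. f (S \<union> {u}) - f S))"
    and i: "1 \<le> i" "i \<le> T"
  shows "measure_pmf.expectation (srrg_dist k Mc i) (\<lambda>S. f (Opt S \<union> S))
      \<ge> (1 - 2 / real k) * measure_pmf.expectation (srrg_dist k Mc (i - 1)) (\<lambda>S. f (Opt S \<union> S))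
        + (1 / real k) * measure_pmf.expectation (srrg_dist k Mc (i - 1)) f"
proof -
  obtain j where ij: "i = Suc j" using i(1) by (cases i) auto
  define D where "D = srrg_dist k Mc j"
  define g where "g = (\<lambda>S. f (Opt S \<union> S))"
  have finN: "finite N" using M unfolding matroid_def by blast
  have finD: "finite (set_pmf (srrg_dist k Mc n))" for n
  proof -
    have "set_pmf (srrg_dist k Mc n) \<subseteq> Pow N"
      using supp[OF M rank kpos Mc_def] mat_sub[OF M] by blast
    then show ?thesis using finN by (meson finite_Pow_iff finite_subset)
  qed
  have finStep: "finite (set_pmf (srrg_step k Mc (Suc j) a))" if a: "a \<in> set_pmf D" for a
  proof -
    have "set_pmf (srrg_step k Mc (Suc j) a) \<subseteq> set_pmf (srrg_dist k Mc (Suc j))"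
      using a unfolding D_def by auto
    then show ?thesis using finD finite_subset by blast
  qed
  have Ei: "measure_pmf.expectation (srrg_dist k Mc i) g
      = (\<Sum>a\<in>set_pmf D. pmf D a * measure_pmf.expectation (srrg_step k Mc (Suc j) a) g)"
    unfolding ij D_def srrg_dist.simps
    by (subst pmf_expectation_bind[of "set_pmf (srrg_dist k Mc j)"])
       (use finD finStep[unfolded D_def] in auto)
  have Ej: "measure_pmf.expectation D h = (\<Sum>a\<in>set_pmf D. pmf D a * h a)" for h :: "'a set \<Rightarrow> real"
    unfolding D_def by (subst integral_measure_pmf_real[of "set_pmf (srrg_dist k Mc j)"])
      (use finD in \<open>auto simp: mult.commute\<close>)
  have "(1 - 2 / real k) * measure_pmf.expectation D g + (1 / real k) * measure_pmf.expectation D f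
      = (\<Sum>a\<in>set_pmf D. pmf D a * ((1 - 2 / real k) * g a + (1 / real k) * f a))"
  proof -
    have "(\<Sum>a\<in>set_pmf D. pmf D a * ((1 - 2 / real k) * g a + (1 / real k) * f a))
       = (\<Sum>a\<in>set_pmf D. (1 - 2 / real k) * (pmf D a * g a) + (1 / real k) * (pmf D a * f a))"
      by (rule sum.cong) (simp_all add: algebra_simps)
    also have "\<dots> = (1 - 2 / real k) * (\<Sum>a\<in>set_pmf D. pmf D a * g a)
        + (1 / real k) * (\<Sum>a\<in>set_pmf D. pmf D a * f a)"
      by (simp add: sum.distrib sum_distrib_left)
    finally show ?thesis unfolding Ej by simp
  qed
  also have "\<dots> \<le> (\<Sum>a\<in>set_pmf D. pmf D a * measure_pmf.expectation (srrg_step k Mc (Suc j) a) g)"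
  proof (rule sum_mono)
    fix a assume a: "a \<in> set_pmf D"
    have sa: "indep a \<and> card a \<le> k" using supp[OF M rank kpos Mc_def] a unfolding D_def by blast
    have "(1 - 2 / real k) * g a + (1 / real k) * f a \<le> measure_pmf.expectation (srrg_step k Mc (Suc j) a) g"
      unfolding g_def
      by (rule pointwise[OF M rank kpos f_nonneg f_sub Opt_def Mc_def]) (use sa in auto)
    then show "pmf D a * ((1 - 2 / real k) * g a + (1 / real k) * f a)
        \<le> pmf D a * measure_pmf.expectation (srrg_step k Mc (Suc j) a) g"
      by (rule mult_left_mono) simp
  qed
  also have "\<dots> = measure_pmf.expectation (srrg_dist k Mc i) g" using Ei by simp
  finally show ?thesis unfolding g_def D_def ij by simp
qed

end
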